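(* Let $0<\beta<\gamma\le1$, let $m\ge0$ be an integer and let $\theta=(k_r)$ be a lacunary sequence. Then $S_\theta^\beta(F,\Delta^m)\subset S_\theta^\gamma(F,\Delta^m)$, and the inclusion is strict.
   Context: A fuzzy number is a map $X:\mathbb{R}\to[0,1]$ which is normal, fuzzy convex, upper semicontinuous, with compact closure of $\{t:X(t)>0\}$; $L(\mathbb{R})$ is the set of fuzzy numbers. Level sets $[X]^\alpha=\{t:X(t)\ge\alpha\}$ ($\alpha\in(0,1]$), $[X]^0=\overline{\{t:X(t)>0\}}$, are compact intervals $[u^\alpha,v^\alpha]$. Subtraction: $[X-Y]^\alpha=[u_1^\alpha-v_2^\alpha,v_1^\alpha-u_2^\alpha]$ where $[X]^\alpha=[u_1^\alpha,v_1^\alpha]$, $[Y]^\alpha=[u_2^\alpha,v_2^\alpha]$. Metric: $d(X,Y)=\sup_{\alpha\in[0,1]}\max\{|u_1^\alpha-u_2^\alpha|,|v_1^\alpha-v_2^\alpha|\}$. For a sequence $X=(X_k)$ in $L(\mathbb{R})$: $(\Delta^0X)_k=X_k$, $(\Delta^1X)_k=X_k-X_{k+1}$, $(\Delta^mX)_k=(\Delta^1(\Delta^{m-1}X))_k$; write $\Delta^mX_k$. A lacunary sequence is an increasing integer sequence $\theta=(k_r)_{r\ge0}$ with $k_0=0$, $h_r=k_r-k_{r-1}\to\infty$; $I_r=(k_{r-1},k_r]$. For $\beta\in(0,1]$, $S_\theta^\beta(F,\Delta^m)$ is the set of sequences $X$ of fuzzy numbers for which there is $X_0\in L(\mathbb{R})$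 with $\lim_{r\to\infty}\frac{1}{h_r^\beta}|\{k\in I_r:d(\Delta^mX_k,X_0)\ge\varepsilon\}|=0$ for every $\varepsilon>0$. *)

theory Defs
  imports "HOL-Analysis.Analysis"
begin

definition upper_semicont :: "(real \<Rightarrow> real) \<Rightarrow> bool" where
  "upper_semicont X \<longleftrightarrow>
     (\<forall>x. \<forall>e>0. \<exists>d>0. \<forall>y. \<bar>y - x\<bar> < d \<longrightarrow> X y < X x + e)"

definition fuzzy_numbers :: "(real \<Rightarrow> real) set" where
  "fuzzy_numbers = {X.
     (\<forall>t. 0 \<le> X t \<and> X t \<le> 1) \<and>
     (\<exists>t. X t = 1) \<and>
     (\<forall>x y l. 0 \<le> l \<and> l \<le> 1 \<longrightarrow> min (X x) (X y) \<le> X (l * x + (1 - l) * y)) \<and>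
     upper_semicont X \<and>
     compact (closure {t. X t > 0})}"

definition level :: "(real \<Rightarrow> real) \<Rightarrow> real \<Rightarrow> real set" where
  "level X a = (if a = 0 then closure {t. X t > 0} else {t. X t \<ge> a})"

definition lower_end :: "(real \<Rightarrow> real) \<Rightarrow> real \<Rightarrow> real" where
  "lower_end X a = Inf (level X a)"

definition upper_end :: "(real \<Rightarrow> real) \<Rightarrow> real \<Rightarrow> real" where
  "upper_end X a = Sup (level X a)"

text \<open>Subtraction defined through its level sets
  [X - Y]^a = [u1^a - v2^a, v1^a - u2^a]; the membership function is
  reconstructed from the level sets in the standard way.\<close>
definition fuzzy_sub :: "(real \<Rightarrow> real) \<Rightarrow> (real \<Rightarrow> real) \<Rightarrow> (real \<Rightarrow> real)" where
  "fuzzy_sub X Y = (\<lambda>t. Sup ({0} \<union> {a. 0 < a \<and> a \<le> 1 \<and>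
       lower_end X a - upper_end Y a \<le> t \<and> t \<le> upper_end X a - lower_end Y a}))"

definition fuzzy_dist :: "(real \<Rightarrow> real) \<Rightarrow> (real \<Rightarrow> real) \<Rightarrow> real" where
  "fuzzy_dist X Y = (SUP a\<in>{0..1}.
       max \<bar>lower_end X a - lower_end Y a\<bar> \<bar>upper_end X a - upper_end Y a\<bar>)"

fun fuzzy_delta :: "nat \<Rightarrow> (nat \<Rightarrow> real \<Rightarrow> real) \<Rightarrow> nat \<Rightarrow> (real \<Rightarrow> real)" where
  "fuzzy_delta 0 X k = X k"
| "fuzzy_delta (Suc m) X k = fuzzy_sub (fuzzy_delta m X k) (fuzzy_delta m X (Suc k))"

definition lacunary :: "(nat \<Rightarrow> nat) \<Rightarrow> bool" where
  "lacunary \<theta> \<longleftrightarrow> strict_mono \<theta> \<and> \<theta> 0 = 0 \<and>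
     filterlim (\<lambda>r. real (\<theta> (Suc r) - \<theta> r)) at_top sequentially"

text \<open>S_theta^beta(F, Delta^m). Index r+1 of the paper corresponds to Suc r here:
  I_{r+1} = {theta r <.. theta (Suc r)}, h_{r+1} = theta (Suc r) - theta r.\<close>
definition lac_stat :: "(nat \<Rightarrow> nat) \<Rightarrow> real \<Rightarrow> nat \<Rightarrow> (nat \<Rightarrow> real \<Rightarrow> real) set" where
  "lac_stat \<theta> \<beta> m = {X. (\<forall>k. X k \<in> fuzzy_numbers) \<and>
     (\<exists>X0\<in>fuzzy_numbers. \<forall>\<epsilon>>0.
        (\<lambda>r. real (card {k\<in>{\<theta> r<..\<theta> (Suc r)}. fuzzy_dist (fuzzy_delta m X k) X0 \<ge> \<epsilon>})
               / (real (\<theta> (Suc r) - \<theta> r)) powr \<beta>) \<longlonglongrightarrow> 0)}"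

end

theory Submission
  imports Defs
begin


definition crisp :: "real \<Rightarrow> real \<Rightarrow> real" where
  "crisp c = (\<lambda>t. if t = c then 1 else 0)"

lemma crisp_pos: "{t. crisp c t > 0} = {c}" by (auto simp: crisp_def)

lemma level_crisp: "0 \<le> a \<Longrightarrow> a \<le> 1 \<Longrightarrow> level (crisp c) a = {c}"
  unfolding level_def using crisp_pos[of c] by (auto simp: crisp_def)

lemma ends_crisp: "0 \<le> a \<Longrightarrow> a \<le> 1 \<Longrightarrow> lower_end (crisp c) a = c \<and> upper_end (crisp c) a = c"
  by (simp add: lower_end_def upper_end_def level_crisp)

lemma crisp_fuzzy: "crisp c \<in> fuzzy_numbers"
proof -
  have usc: "upper_semicont (crisp c)"
    unfolding upper_semicont_def
  proof (intro allI impI)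
    fix x e :: real assume e: "e > 0"
    show "\<exists>d>0. \<forall>y. \<bar>y - x\<bar> < d \<longrightarrow> crisp c y < crisp c x + e"
    proof (cases "x = c")
      case True then show ?thesis using e by (intro exI[of _ 1]) (auto simp: crisp_def)
    next
      case False then show ?thesis using e
        by (intro exI[of _ "\<bar>x - c\<bar>"]) (auto simp: crisp_def)
    qed
  qed
  have conv: "min (crisp c x) (crisp c y) \<le> crisp c (l * x + (1 - l) * y)" for x y l
  proof (cases "x = c \<and> y = c")
    case True
    then have "l * x + (1 - l) * y = c" by (simp add: algebra_simps)
    then show ?thesis by (simp add: crisp_def)
  next
    case False then show ?thesis by (auto simp: crisp_def)
  qed
  show ?thesis unfolding fuzzy_numbers_def using usc conv crisp_pos[of c]
    by (auto simp: crisp_def intro: exI[of _ c])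
qed

lemma dist_crisp: "fuzzy_dist (crisp a) (crisp b) = \<bar>a - b\<bar>"
proof -
  have "fuzzy_dist (crisp a) (crisp b) = (SUP x\<in>{0..1::real}. \<bar>a - b\<bar>)"
    unfolding fuzzy_dist_def by (intro SUP_cong) (auto simp: ends_crisp)
  also have "\<dots> = \<bar>a - b\<bar>" by simp
  finally show ?thesis .
qed

lemma sub_crisp: "fuzzy_sub (crisp a) (crisp b) = crisp (a - b)"
proof
  fix t
  have e: "{x. 0 < x \<and> x \<le> 1 \<and> lower_end (crisp a) x - upper_end (crisp b) x \<le> t \<and>
          t \<le> upper_end (crisp a) x - lower_end (crisp b) x} =
        {x. 0 < x \<and> x \<le> 1 \<and> t = a - b}"
    using ends_crisp by fastforce
  show "fuzzy_sub (crisp a) (crisp b) t = crisp (a - b) t"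
  proof (cases "t = a - b")
    case True
    then have "{0} \<union> {x. 0 < x \<and> x \<le> 1 \<and> t = a - b} = {0..1::real}" by auto
    then show ?thesis unfolding fuzzy_sub_def e using True by (simp add: crisp_def)
  next
    case False
    then show ?thesis unfolding fuzzy_sub_def e by (simp add: crisp_def)
  qed
qed

fun rdelta :: "nat \<Rightarrow> (nat \<Rightarrow> real) \<Rightarrow> nat \<Rightarrow> real" where
  "rdelta 0 x k = x k"
| "rdelta (Suc m) x k = rdelta m x k - rdelta m x (Suc k)"

lemma delta_crisp: "fuzzy_delta m (\<lambda>k. crisp (x k)) k = crisp (rdelta m x k)"
  by (induction m arbitrary: k) (simp_all add: sub_crisp)

lemma rdelta_Suc: "rdelta (Suc m) x k = rdelta m (\<lambda>j. x j - x (Suc j)) k"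
  by (induction m arbitrary: k) simp_all

fun a1 :: "(nat \<Rightarrow> real) \<Rightarrow> nat \<Rightarrow> real" where
  "a1 y 0 = 0"
| "a1 y (Suc k) = a1 y k - y k"

fun anti :: "nat \<Rightarrow> (nat \<Rightarrow> real) \<Rightarrow> nat \<Rightarrow> real" where
  "anti 0 y = y"
| "anti (Suc m) y = a1 (anti m y)"

lemma rdelta_anti: "rdelta m (anti m y) = y"
proof (induction m)
  case 0 then show ?case by (simp add: fun_eq_iff)
next
  case (Suc m)
  have "(\<lambda>j. a1 (anti m y) j - a1 (anti m y) (Suc j)) = anti m y" by (simp add: fun_eq_iff)
  then show ?case using Suc by (simp add: fun_eq_iff rdelta_Suc del: rdelta.simps)
qed

lemma dist_bound:
  assumes "X0 \<in> fuzzy_numbers"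
  shows "\<bar>c - lower_end X0 1\<bar> \<le> fuzzy_dist (crisp c) X0"
proof -
  let ?K = "closure {t. X0 t > 0}"
  have "compact ?K" using assms unfolding fuzzy_numbers_def by auto
  then obtain B where B: "\<forall>t\<in>?K. norm t \<le> B" using compact_imp_bounded bounded_iff by metis
  obtain t1 where t1: "X0 t1 = 1" using assms unfolding fuzzy_numbers_def by auto
  have sub: "level X0 a \<subseteq> ?K" if "0 \<le> a" for a
    using that unfolding level_def by (auto intro!: closure_subset[THEN subsetD] simp: less_le_trans)
  have ne: "t1 \<in> level X0 a" if "0 \<le> a" "a \<le> 1" for a
    using that t1 unfolding level_def by (auto intro!: closure_subset[THEN subsetD])
  have bnd: "\<bar>lower_end X0 a\<bar> \<le> B \<and> \<bar>upper_end X0 a\<bar> \<le> B" if "0 \<le> a" "a \<le> 1" for a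
  proof -
    have bb: "\<forall>t\<in>level X0 a. -B \<le> t \<and> t \<le> B" using sub[OF that(1)] B by fastforce
    have bdd: "bdd_below (level X0 a)" "bdd_above (level X0 a)" using bb by (auto intro!: bdd_belowI bdd_aboveI)
    have "Inf (level X0 a) \<le> t1" "t1 \<le> Sup (level X0 a)"
      using ne[OF that] bdd by (auto intro: cInf_lower cSup_upper)
    moreover have "-B \<le> Inf (level X0 a)" "Sup (level X0 a) \<le> B"
      using bb ne[OF that] by (auto intro!: cInf_greatest cSup_least)
    ultimately show ?thesis using bb ne[OF that] unfolding lower_end_def upper_end_def by force
  qed
  let ?f = "\<lambda>a. max \<bar>lower_end (crisp c) a - lower_end X0 a\<bar> \<bar>upper_end (crisp c) a - upper_end X0 a\<bar>"
  have "bdd_above (?f ` {0..1})"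
  proof (rule bdd_aboveI)
    fix z assume "z \<in> ?f ` {0..1}"
    then obtain a where a: "0 \<le> a" "a \<le> 1" "z = ?f a" by auto
    show "z \<le> \<bar>c\<bar> + B" using bnd[OF a(1,2)] ends_crisp[OF a(1,2), of c] a(3) by auto
  qed
  then have "?f 1 \<le> fuzzy_dist (crisp c) X0" unfolding fuzzy_dist_def by (intro cSUP_upper) auto
  then show ?thesis using ends_crisp[of 1 c] by simp
qed

lemma h_ge1:
  assumes "lacunary \<theta>" shows "1 \<le> real (\<theta> (Suc r) - \<theta> r)"
proof -
  have "\<theta> r < \<theta> (Suc r)" using assms unfolding lacunary_def strict_mono_def by auto
  then show ?thesis by simp
qed

lemma incl:
  assumes "0 < \<beta>" and "\<beta> < \<gamma>" and "lacunary \<theta>"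
  shows "lac_stat \<theta> \<beta> m \<subseteq> lac_stat \<theta> \<gamma> m"
proof
  fix X assume "X \<in> lac_stat \<theta> \<beta> m"
  then obtain X0 where X: "\<forall>k. X k \<in> fuzzy_numbers" and X0: "X0 \<in> fuzzy_numbers"
    and lim: "\<forall>\<epsilon>>0. (\<lambda>r. real (card {k\<in>{\<theta> r<..\<theta> (Suc r)}. fuzzy_dist (fuzzy_delta m X k) X0 \<ge> \<epsilon>})
               / (real (\<theta> (Suc r) - \<theta> r)) powr \<beta>) \<longlonglongrightarrow> 0"
    unfolding lac_stat_def by blast
  have "\<forall>\<epsilon>>0. (\<lambda>r. real (card {k\<in>{\<theta> r<..\<theta> (Suc r)}. fuzzy_dist (fuzzy_delta m X k) X0 \<ge> \<epsilon>})
               / (real (\<theta> (Suc r) - \<theta> r)) powr \<gamma>) \<longlonglongrightarrow> 0"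
  proof (intro allI impI)
    fix \<epsilon> :: real assume "\<epsilon> > 0"
    define c where "c r = real (card {k\<in>{\<theta> r<..\<theta> (Suc r)}. fuzzy_dist (fuzzy_delta m X k) X0 \<ge> \<epsilon>})" for r
    define h where "h r = real (\<theta> (Suc r) - \<theta> r)" for r
    have h1: "1 \<le> h r" for r unfolding h_def using h_ge1[OF assms(3)] .
    have L: "(\<lambda>r. c r / h r powr \<beta>) \<longlonglongrightarrow> 0" using lim \<open>\<epsilon>>0\<close> unfolding c_def h_def by blast
    have le: "c r / h r powr \<gamma> \<le> c r / h r powr \<beta>" for r
    proof -
      have "h r powr \<beta> \<le> h r powr \<gamma>" using h1[of r] assms by (intro powr_mono) auto
      moreover have "0 < h r powr \<beta>" using h1[of r] by simp
      moreover have "0 \<le> c r" unfolding c_def by simp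
      ultimately show ?thesis by (intro divide_left_mono) (auto intro: mult_pos_pos)
    qed
    have "(\<lambda>r. c r / h r powr \<gamma>) \<longlonglongrightarrow> 0"
      by (rule tendsto_sandwich[of "\<lambda>r. 0" _ sequentially "\<lambda>r. c r / h r powr \<beta>"])
         (use le L in \<open>auto simp: c_def\<close>)
    then show "(\<lambda>r. real (card {k\<in>{\<theta> r<..\<theta> (Suc r)}. fuzzy_dist (fuzzy_delta m X k) X0 \<ge> \<epsilon>})
               / (real (\<theta> (Suc r) - \<theta> r)) powr \<gamma>) \<longlonglongrightarrow> 0" unfolding c_def h_def .
  qed
  then show "X \<in> lac_stat \<theta> \<gamma> m" unfolding lac_stat_def using X X0 by blast
qed

theorem theorem2p5:
  fixes \<beta> \<gamma> :: real and m :: nat and \<theta> :: "nat \<Rightarrow> nat"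
  assumes "0 < \<beta>" and "\<beta> < \<gamma>" and "\<gamma> \<le> 1" and "lacunary \<theta>"
  shows "lac_stat \<theta> \<beta> m \<subseteq> lac_stat \<theta> \<gamma> m \<and> lac_stat \<theta> \<beta> m \<noteq> lac_stat \<theta> \<gamma> m"
proof -
  have sm: "strict_mono \<theta>" and hlim: "filterlim (\<lambda>r. real (\<theta> (Suc r) - \<theta> r)) at_top sequentially"
    using assms(4) unfolding lacunary_def by auto
  define h where "h r = real (\<theta> (Suc r) - \<theta> r)" for r
  define n where "n r = nat \<lceil>h r powr \<beta>\<rceil>" for r
  have h1: "1 \<le> h r" for r unfolding h_def using h_ge1[OF assms(4)] .
  have hl: "filterlim h at_top sequentially" using hlim unfolding h_def .
  have pb: "h r powr \<beta> \<le> h r" for r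
  proof -
    have "h r powr \<beta> \<le> h r powr 1" using h1[of r] assms by (intro powr_mono) auto
    then show ?thesis using h1[of r] by simp
  qed
  have nle: "n r \<le> \<theta> (Suc r) - \<theta> r" for r
  proof -
    have "\<lceil>h r powr \<beta>\<rceil> \<le> int (\<theta> (Suc r) - \<theta> r)"
      using pb[of r] by (intro ceiling_le) (simp add: h_def)
    then show ?thesis unfolding n_def by (metis nat_int nat_mono)
  qed
  have nlow: "h r powr \<beta> \<le> real (n r)" for r
    unfolding n_def by linarith
  have nup: "real (n r) \<le> h r powr \<beta> + 1" for r
    using h1[of r] unfolding n_def by (simp add: of_nat_nat)
  define y where "y k = (if \<exists>r. \<theta> r < k \<and> k \<le> \<theta> r + n r then 1 else 0::real)" for k
  have uniq: "r' = r" if "\<theta> r < k" "k \<le> \<theta> (Suc r)" "\<theta> r' < k" "k \<le> \<theta> r' + n r'" for r r' k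
  proof (rule ccontr)
    assume "r' \<noteq> r"
    then consider "Suc r' \<le> r" | "Suc r \<le> r'" by linarith
    then show False
    proof cases
      case 1
      then have "\<theta> (Suc r') \<le> \<theta> r" using sm strict_mono_leD by blast
      moreover have "\<theta> r' < \<theta> (Suc r')" using sm by (simp add: strict_mono_def)
      ultimately show False using that nle[of r'] by linarith
    next
      case 2
      then have "\<theta> (Suc r) \<le> \<theta> r'" using sm strict_mono_leD by blast
      then show False using that by linarith
    qed
  qed
  have C1: "{k\<in>{\<theta> r<..\<theta> (Suc r)}. y k = 1} = {\<theta> r<..\<theta> r + n r}" for r
  proof -
    have "\<theta> r < \<theta> (Suc r)" using sm by (simp add: strict_mono_def)
    show ?thesis
    proof (intro equalityI subsetI)
      fix k assume k: "k \<in> {k\<in>{\<theta> r<..\<theta> (Suc r)}. y k = 1}"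
      then obtain r' where "\<theta> r' < k" "k \<le> \<theta> r' + n r'" unfolding y_def by (auto split: if_splits)
      with k uniq[of r k r'] show "k \<in> {\<theta> r<..\<theta> r + n r}" by auto
    next
      fix k assume k: "k \<in> {\<theta> r<..\<theta> r + n r}"
      then have "y k = 1" unfolding y_def by auto
      with k nle[of r] \<open>\<theta> r < \<theta> (Suc r)\<close> show "k \<in> {k\<in>{\<theta> r<..\<theta> (Suc r)}. y k = 1}" by auto
    qed
  qed
  have C0: "{k\<in>{\<theta> r<..\<theta> (Suc r)}. y k = 0} = {\<theta> r + n r<..\<theta> (Suc r)}" for r
  proof -
    have "\<theta> r < \<theta> (Suc r)" using sm by (simp add: strict_mono_def)
    show ?thesis
    proof (intro equalityI subsetI)
      fix k assume k: "k \<in> {k\<in>{\<theta> r<..\<theta> (Suc r)}. y k = 0}"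
      then have "\<not> (\<theta> r < k \<and> k \<le> \<theta> r + n r)" unfolding y_def by (auto split: if_splits)
      with k show "k \<in> {\<theta> r + n r<..\<theta> (Suc r)}" by auto
    next
      fix k assume k: "k \<in> {\<theta> r + n r<..\<theta> (Suc r)}"
      have "y k = 0" unfolding y_def
      proof (rule if_not_P, rule notI)
        assume "\<exists>r'. \<theta> r' < k \<and> k \<le> \<theta> r' + n r'"
        then obtain r' where "\<theta> r' < k" "k \<le> \<theta> r' + n r'" by blast
        with k uniq[of r k r'] show False by auto
      qed
      with k show "k \<in> {k\<in>{\<theta> r<..\<theta> (Suc r)}. y k = 0}" by auto
    qed
  qed
  have y01: "y k = 0 \<or> y k = 1" for k unfolding y_def by auto
  define X where "X = (\<lambda>k. crisp (anti m y k))"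
  have D: "fuzzy_delta m X k = crisp (y k)" for k
    unfolding X_def delta_crisp rdelta_anti ..
  have Xf: "\<forall>k. X k \<in> fuzzy_numbers" unfolding X_def using crisp_fuzzy by blast
  have Xin: "X \<in> lac_stat \<theta> \<gamma> m"
    unfolding lac_stat_def
  proof (intro CollectI conjI Xf bexI[of _ "crisp 0"] allI impI crisp_fuzzy)
    fix \<epsilon> :: real assume e: "\<epsilon> > 0"
    define c where "c r = real (card {k\<in>{\<theta> r<..\<theta> (Suc r)}. fuzzy_dist (fuzzy_delta m X k) (crisp 0) \<ge> \<epsilon>})" for r
    have cle: "c r \<le> h r powr \<beta> + 1" for r
    proof -
      have "{k\<in>{\<theta> r<..\<theta> (Suc r)}. fuzzy_dist (fuzzy_delta m X k) (crisp 0) \<ge> \<epsilon>}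
            \<subseteq> {k\<in>{\<theta> r<..\<theta> (Suc r)}. y k = 1}"
      proof (intro subsetI)
        fix k assume k: "k \<in> {k\<in>{\<theta> r<..\<theta> (Suc r)}. fuzzy_dist (fuzzy_delta m X k) (crisp 0) \<ge> \<epsilon>}"
        then have "\<epsilon> \<le> \<bar>y k\<bar>" by (simp add: D dist_crisp)
        then have "y k = 1" using e y01[of k] by auto
        then show "k \<in> {k\<in>{\<theta> r<..\<theta> (Suc r)}. y k = 1}" using k by simp
      qed
      then have "c r \<le> real (card {\<theta> r<..\<theta> r + n r})"
        unfolding c_def C1 by (intro of_nat_mono card_mono) auto
      then show ?thesis using nup[of r] by simp
    qed
    have bnd: "c r / h r powr \<gamma> \<le> h r powr (\<beta> - \<gamma>) + h r powr (- \<gamma>)" for r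
    proof -
      have pos: "0 < h r powr \<gamma>" using h1[of r] by simp
      have "c r / h r powr \<gamma> \<le> (h r powr \<beta> + 1) / h r powr \<gamma>"
        using cle[of r] pos by (simp add: divide_right_mono)
      also have "\<dots> = h r powr (\<beta> - \<gamma>) + h r powr (- \<gamma>)"
        using h1[of r] by (simp add: add_divide_distrib powr_diff powr_minus divide_inverse distrib_right)
      finally show ?thesis .
    qed
    have t: "(\<lambda>r. h r powr (\<beta> - \<gamma>) + h r powr (- \<gamma>)) \<longlonglongrightarrow> 0"
      using tendsto_add[OF tendsto_neg_powr[OF _ hl] tendsto_neg_powr[OF _ hl]] assms by simp
    have "(\<lambda>r. c r / h r powr \<gamma>) \<longlonglongrightarrow> 0"
      by (rule tendsto_sandwich[of "\<lambda>r. 0" _ sequentially "\<lambda>r. h r powr (\<beta> - \<gamma>) + h r powr (- \<gamma>)"])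
         (use bnd t in \<open>auto simp: c_def\<close>)
    then show "(\<lambda>r. real (card {k\<in>{\<theta> r<..\<theta> (Suc r)}. fuzzy_dist (fuzzy_delta m X k) (crisp 0) \<ge> \<epsilon>})
               / (real (\<theta> (Suc r) - \<theta> r)) powr \<gamma>) \<longlonglongrightarrow> 0" unfolding c_def h_def .
  qed
  have Xnot: "X \<notin> lac_stat \<theta> \<beta> m"
  proof
    assume "X \<in> lac_stat \<theta> \<beta> m"
    then obtain X0 where X0: "X0 \<in> fuzzy_numbers"
      and lim: "(\<lambda>r. real (card {k\<in>{\<theta> r<..\<theta> (Suc r)}. fuzzy_dist (fuzzy_delta m X k) X0 \<ge> 1/2})
               / (real (\<theta> (Suc r) - \<theta> r)) powr \<beta>) \<longlonglongrightarrow> 0"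
    proof -
      from \<open>X \<in> lac_stat \<theta> \<beta> m\<close> obtain X0 where X0in: "X0 \<in> fuzzy_numbers" and all:
        "\<forall>\<epsilon>>0. (\<lambda>r. real (card {k\<in>{\<theta> r<..\<theta> (Suc r)}. fuzzy_dist (fuzzy_delta m X k) X0 \<ge> \<epsilon>})
               / (real (\<theta> (Suc r) - \<theta> r)) powr \<beta>) \<longlonglongrightarrow> 0"
        unfolding lac_stat_def by blast
      show ?thesis by (rule that[OF X0in], rule all[rule_format]) simp
    qed
    define c where "c r = real (card {k\<in>{\<theta> r<..\<theta> (Suc r)}. fuzzy_dist (fuzzy_delta m X k) X0 \<ge> 1/2})" for r
    let ?L = "lower_end X0 1"
    have ev1: "eventually (\<lambda>r. h r powr (\<beta> - 1) \<le> 1/4) sequentially"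
    proof -
      have t: "(\<lambda>r. h r powr (\<beta> - 1)) \<longlonglongrightarrow> 0"
        using tendsto_neg_powr[OF _ hl, of "\<beta> - 1"] assms by simp
      have "eventually (\<lambda>r. h r powr (\<beta> - 1) < 1/4) sequentially"
        by (rule order_tendstoD(2)[OF t]) simp
      then show ?thesis by (rule eventually_mono) simp
    qed
    have ev2: "eventually (\<lambda>r. 4 \<le> h r) sequentially"
      using hl by (simp add: filterlim_at_top)
    have ev3: "eventually (\<lambda>r. c r / h r powr \<beta> < 1) sequentially"
      using lim unfolding c_def h_def by (intro order_tendstoD(2)) auto
    have "eventually (\<lambda>r. False) sequentially"
      using ev1 ev2 ev3
    proof eventually_elim
      case (elim r)
      have pos: "0 < h r powr \<beta>" using h1[of r] by simp
      have "1 \<le> c r / h r powr \<beta>"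
      proof (cases "\<bar>1 - ?L\<bar> \<ge> 1/2")
        case True
        have "{k\<in>{\<theta> r<..\<theta> (Suc r)}. y k = 1}
              \<subseteq> {k\<in>{\<theta> r<..\<theta> (Suc r)}. fuzzy_dist (fuzzy_delta m X k) X0 \<ge> 1/2}"
          using True dist_bound[OF X0, of 1] by (auto simp: D)
        then have "real (card {\<theta> r<..\<theta> r + n r}) \<le> c r"
          unfolding c_def C1 by (intro of_nat_mono card_mono) auto
        then have "h r powr \<beta> \<le> c r" using nlow[of r] by simp
        then show ?thesis using pos by simp
      next
        case False
        then have F: "\<bar>0 - ?L\<bar> \<ge> 1/2" by linarith
        have "{k\<in>{\<theta> r<..\<theta> (Suc r)}. y k = 0}
              \<subseteq> {k\<in>{\<theta> r<..\<theta> (Suc r)}. fuzzy_dist (fuzzy_delta m X k) X0 \<ge> 1/2}"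
          using F dist_bound[OF X0, of 0] by (auto simp: D)
        then have "real (card {\<theta> r + n r<..\<theta> (Suc r)}) \<le> c r"
          unfolding c_def C0 by (intro of_nat_mono card_mono) auto
        then have cc: "h r - real (n r) \<le> c r" using nle[of r] unfolding h_def by simp
        have "h r powr \<beta> = h r powr (\<beta> - 1) * h r powr 1"
          by (simp only: powr_add[symmetric]) simp
        also have "\<dots> = h r powr (\<beta> - 1) * h r" using h1[of r] by simp
        also have "\<dots> \<le> 1/4 * h r" using elim(1) h1[of r] by (intro mult_right_mono) auto
        finally have "h r powr \<beta> \<le> h r / 4" by simp
        then have "h r powr \<beta> \<le> c r" using cc nup[of r] elim(2) by linarith
        then show ?thesis using pos by simp
      qed
      then show False using elim(3) by simp
    qed
    then show False by simp
  qed
  show ?thesis using incl[OF assms(1,2,4), of m] Xin Xnot by blast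
qed

end
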